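(* Let $X$ be a time-homogeneous Markov chain on $\mathbf{R}$ with arbitrary initial distribution and renewal measure $U(B)=\sum_{n\ge0}\mathbf{P}\{X_n\in B\}$, whose jumps are nonnegative, $\xi(x)\ge0$ a.s. for all $x$. Suppose there is $A>0$ with $\gamma:=\inf_{x\in\mathbf{R}}\mathbf{P}\{\xi(x)>A\}>0$. Then $U(x,x+h]\le (A+h)/(\gamma^2A)$ for all $x\in\mathbf{R}$ and $h>0$.
   Context: $\xi(x)$ denotes a random variable with $\mathbf{P}\{x+\xi(x)\in B\}=P(x,B)$, $P$ being the transition kernel of the chain. *)

theory Defs
  imports "HOL-Probability.Probability"
begin

text \<open>Law of X_n for a time-homogeneous Markov chain on the reals with initial
  distribution mu and transition kernel K (K x = law of x + xi(x)).\<close>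
definition markov_law :: "real measure \<Rightarrow> (real \<Rightarrow> real measure) \<Rightarrow> nat \<Rightarrow> real measure" where
  "markov_law \<mu> K n = ((\<lambda>M. M \<bind> K) ^^ n) \<mu>"

definition renewal_measure :: "real measure \<Rightarrow> (real \<Rightarrow> real measure) \<Rightarrow> real set \<Rightarrow> ennreal" where
  "renewal_measure \<mu> K B = (\<Sum>n. emeasure (markov_law \<mu> K n) B)"

end

theory Submission
  imports Defs
begin

lemma law_space:
  assumes "\<mu> \<in> space (prob_algebra borel)" "K \<in> borel \<rightarrow>\<^sub>M prob_algebra borel"
  shows "markov_law \<mu> K n \<in> space (prob_algebra borel)"
proof (induction n)
  case 0 then show ?case using assms by (simp add: markov_law_def)
next
  case (Suc n)
  have eq: "markov_law \<mu> K (Suc n) = markov_law \<mu> K n \<bind> K" by (simp add: markov_law_def)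
  show ?case unfolding eq using prob_space_bind'[OF Suc assms(2)] sets_bind'[OF Suc assms(2)]
    by (simp add: space_prob_algebra)
qed

theorem mainTheorem5:
  fixes \<mu> :: "real measure" and K :: "real \<Rightarrow> real measure" and A \<gamma> x h :: real
  assumes init: "prob_space \<mu>" "sets \<mu> = sets borel"
    and kernel: "K \<in> borel \<rightarrow>\<^sub>M prob_algebra borel"
    and nonneg_jumps: "\<And>y. AE z in K y. z \<ge> y"
    and A_pos: "A > 0"
    and gamma_def: "\<gamma> = (INF y. measure (K y) {y + A<..})"
    and gamma_pos: "\<gamma> > 0"
    and h_pos: "h > 0"
  shows "renewal_measure \<mu> K {x<..x + h} \<le> ennreal ((A + h) / (\<gamma>\<^sup>2 * A))"
proof -
  define M where "M = (A + h) / A"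
  define g where "g y = min M (max 0 ((x + h - y) / A + 1))" for y
  define I where "I = {x<..x + h}"
  define L where "L = markov_law \<mu> K"
  have Ky: "prob_space (K y)" "sets (K y) = sets borel" for y
    using measurable_space[OF kernel, of y] by (auto simp: space_prob_algebra)
  have gle: "\<gamma> \<le> measure (K y) {y + A<..}" for y
    unfolding gamma_def by (rule cINF_lower) (auto intro!: bdd_belowI[of _ 0])
  have g1: "\<gamma> \<le> 1" using gle[of 0] prob_space.prob_le_1[OF Ky(1)] by (meson order_trans)
  have gmeas: "g \<in> borel_measurable borel" unfolding g_def by measurable
  have g_nn: "0 \<le> g y" for y unfolding g_def M_def using A_pos h_pos by auto
  have g_le: "g y \<le> M" for y unfolding g_def by auto
  have gmono: "y \<le> z \<Longrightarrow> g z \<le> g y" for y z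
  proof -
    assume "y \<le> z"
    then have "(x + h - z) / A \<le> (x + h - y) / A" using A_pos by (intro divide_right_mono) auto
    then show ?thesis unfolding g_def by (intro min.mono max.mono) auto
  qed
  have key: "g z + indicator {y + A<..} z \<le> g y" if "y \<in> I" "y \<le> z" for y z
  proof (cases "z > y + A")
    case True
    have "(x + h - z) / A + 1 \<le> (x + h - y) / A"
    proof -
      have "(x + h - z) + A \<le> x + h - y" using True by simp
      then have "((x + h - z) + A) / A \<le> (x + h - y) / A" using A_pos by (intro divide_right_mono) auto
      then show ?thesis using A_pos by (simp add: add_divide_distrib)
    qed
    moreover have "g y = (x + h - y) / A + 1" using that A_pos
      unfolding g_def M_def I_def by (auto simp: field_simps)
    moreover have "0 \<le> (x + h - y) / A" using that A_pos unfolding I_def by auto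
    ultimately show ?thesis using True unfolding g_def by (auto simp: indicator_def)
  next
    case False then show ?thesis using gmono[OF that(2)] by (simp add: indicator_def)
  qed
  have step: "(\<integral>\<^sup>+z. ennreal (g z) \<partial>K y) + ennreal \<gamma> * indicator I y \<le> ennreal (g y)" for y
  proof (cases "y \<in> I")
    case True
    have "(\<integral>\<^sup>+z. ennreal (g z) \<partial>K y) + ennreal \<gamma> \<le>
        (\<integral>\<^sup>+z. ennreal (g z) \<partial>K y) + emeasure (K y) {y + A<..}"
      using gle[of y] finite_measure.emeasure_eq_measure[OF prob_space.finite_measure[OF Ky(1)]] by (auto intro: add_left_mono)
    also have "\<dots> = (\<integral>\<^sup>+z. ennreal (g z) + indicator {y + A<..} z \<partial>K y)"
      using Ky(2) gmeas by (subst nn_integral_add) (auto cong: measurable_cong_sets)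
    also have "\<dots> \<le> (\<integral>\<^sup>+z. ennreal (g y) \<partial>K y)"
    proof (rule nn_integral_mono_AE)
      show "AE z in K y. ennreal (g z) + indicator {y + A<..} z \<le> ennreal (g y)"
        using nonneg_jumps[of y]
      proof eventually_elim
        case (elim z)
        have "ennreal (g z) + indicator {y + A<..} z = ennreal (g z + indicator {y + A<..} z)"
          using g_nn by (simp add: ennreal_plus indicator_def)
        also have "\<dots> \<le> ennreal (g y)" using key[OF True elim] by (rule ennreal_leI)
        finally show ?case .
      qed
    qed
    also have "\<dots> = ennreal (g y)" using prob_space.emeasure_space_1[OF Ky(1)] by simp
    finally show ?thesis using True by simp
  next
    case False
    have "(\<integral>\<^sup>+z. ennreal (g z) \<partial>K y) \<le> (\<integral>\<^sup>+z. ennreal (g y) \<partial>K y)"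
      by (rule nn_integral_mono_AE) (use nonneg_jumps[of y] in \<open>auto intro: ennreal_leI gmono\<close>)
    also have "\<dots> = ennreal (g y)" using prob_space.emeasure_space_1[OF Ky(1)] by simp
    finally show ?thesis using False by simp
  qed
  have Lsp: "L n \<in> space (prob_algebra borel)" for n
    unfolding L_def by (rule law_space) (use init kernel in \<open>auto simp: space_prob_algebra\<close>)
  have Lsets: "sets (L n) = sets borel" for n using Lsp[of n] by (simp add: space_prob_algebra)
  have Kmeas: "K \<in> L n \<rightarrow>\<^sub>M subprob_algebra borel" for n
    using measurable_prob_algebraD[OF kernel] Lsets[of n] by (simp cong: measurable_cong_sets)
  have Imeas: "I \<in> sets borel" unfolding I_def by simp
  have rec: "(\<integral>\<^sup>+y. ennreal (g y) \<partial>L (Suc n)) + ennreal \<gamma> * emeasure (L n) I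
      \<le> (\<integral>\<^sup>+y. ennreal (g y) \<partial>L n)" for n
  proof -
    have eq: "L (Suc n) = L n \<bind> K" by (simp add: L_def markov_law_def)
    have "(\<integral>\<^sup>+y. ennreal (g y) \<partial>L (Suc n)) = (\<integral>\<^sup>+y. \<integral>\<^sup>+z. ennreal (g z) \<partial>K y \<partial>L n)"
      unfolding eq by (rule nn_integral_bind[OF _ Kmeas]) (use gmeas in simp)
    moreover have "ennreal \<gamma> * emeasure (L n) I = (\<integral>\<^sup>+y. ennreal \<gamma> * indicator I y \<partial>L n)"
      using Imeas Lsets[of n] by (simp add: nn_integral_cmult_indicator)
    moreover have "(\<integral>\<^sup>+y. \<integral>\<^sup>+z. ennreal (g z) \<partial>K y \<partial>L n) + (\<integral>\<^sup>+y. ennreal \<gamma> * indicator I y \<partial>L n)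
        = (\<integral>\<^sup>+y. (\<integral>\<^sup>+z. ennreal (g z) \<partial>K y) + ennreal \<gamma> * indicator I y \<partial>L n)"
    proof (rule nn_integral_add[symmetric])
      show "(\<lambda>y. \<integral>\<^sup>+z. ennreal (g z) \<partial>K y) \<in> borel_measurable (L n)"
        using measurable_comp[OF Kmeas nn_integral_measurable_subprob_algebra[of "\<lambda>z. ennreal (g z)" borel]] gmeas
        by (simp add: comp_def)
      show "(\<lambda>y. ennreal \<gamma> * indicator I y) \<in> borel_measurable (L n)"
        using Imeas Lsets[of n] by (simp cong: measurable_cong_sets)
    qed
    moreover have "(\<integral>\<^sup>+y. (\<integral>\<^sup>+z. ennreal (g z) \<partial>K y) + ennreal \<gamma> * indicator I y \<partial>L n)
        \<le> (\<integral>\<^sup>+y. ennreal (g y) \<partial>L n)"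
      by (rule nn_integral_mono) (rule step)
    ultimately show ?thesis by simp
  qed
  have ind: "(\<integral>\<^sup>+y. ennreal (g y) \<partial>L n) + ennreal \<gamma> * (\<Sum>k<n. emeasure (L k) I)
      \<le> (\<integral>\<^sup>+y. ennreal (g y) \<partial>L 0)" for n
  proof (induction n)
    case 0 then show ?case by simp
  next
    case (Suc n)
    have "(\<integral>\<^sup>+y. ennreal (g y) \<partial>L (Suc n)) + ennreal \<gamma> * (\<Sum>k<Suc n. emeasure (L k) I)
       = ((\<integral>\<^sup>+y. ennreal (g y) \<partial>L (Suc n)) + ennreal \<gamma> * emeasure (L n) I)
          + ennreal \<gamma> * (\<Sum>k<n. emeasure (L k) I)"
      by (simp add: distrib_left add_ac)
    also have "\<dots> \<le> (\<integral>\<^sup>+y. ennreal (g y) \<partial>L n) + ennreal \<gamma> * (\<Sum>k<n. emeasure (L k) I)"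
      using rec[of n] by (rule add_right_mono)
    finally show ?case using Suc by simp
  qed
  have L0: "(\<integral>\<^sup>+y. ennreal (g y) \<partial>L 0) \<le> ennreal M"
  proof -
    have "(\<integral>\<^sup>+y. ennreal (g y) \<partial>L 0) \<le> (\<integral>\<^sup>+y. ennreal M \<partial>L 0)"
      by (rule nn_integral_mono) (simp add: g_le ennreal_leI)
    also have "\<dots> = ennreal M" using init by (simp add: L_def markov_law_def prob_space.emeasure_space_1)
    finally show ?thesis .
  qed
  have part: "ennreal \<gamma> * (\<Sum>k<n. emeasure (L k) I) \<le> ennreal M" for n
  proof -
    have "ennreal \<gamma> * (\<Sum>k<n. emeasure (L k) I) \<le> (\<integral>\<^sup>+y. ennreal (g y) \<partial>L n) + ennreal \<gamma> * (\<Sum>k<n. emeasure (L k) I)"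
      by (rule add_increasing) auto
    then show ?thesis using ind[of n] L0 by (meson order_trans)
  qed
  have U: "ennreal \<gamma> * renewal_measure \<mu> K I \<le> ennreal M"
  proof -
    have "ennreal \<gamma> * renewal_measure \<mu> K I = (\<Sum>k. ennreal \<gamma> * emeasure (L k) I)"
      by (simp add: renewal_measure_def L_def)
    also have "\<dots> \<le> ennreal M"
      by (rule suminf_le_const) (auto simp: sum_distrib_left[symmetric] part)
    finally show ?thesis .
  qed
  have "renewal_measure \<mu> K I = ennreal (1 / \<gamma>) * (ennreal \<gamma> * renewal_measure \<mu> K I)"
    using gamma_pos by (simp add: mult.assoc[symmetric] ennreal_mult[symmetric])
  also have "\<dots> \<le> ennreal (1 / \<gamma>) * ennreal M" using U by (rule mult_left_mono) simp
  also have "\<dots> = ennreal (M / \<gamma>)" using gamma_pos A_pos h_pos by (simp add: ennreal_mult[symmetric] M_def)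
  also have "\<dots> \<le> ennreal ((A + h) / (\<gamma>\<^sup>2 * A))"
  proof (rule ennreal_leI)
    have "M / \<gamma> = (A + h) / (\<gamma> * A)" unfolding M_def by simp
    also have "\<dots> \<le> (A + h) / (\<gamma>\<^sup>2 * A)"
    proof (rule divide_left_mono)
      have "\<gamma> * \<gamma> \<le> \<gamma> * 1" using gamma_pos g1 by (intro mult_left_mono) auto
      then show "\<gamma>\<^sup>2 * A \<le> \<gamma> * A" using A_pos by (simp add: power2_eq_square mult_right_mono)
      show "0 \<le> A + h" using A_pos h_pos by simp
      show "0 < \<gamma> * A * (\<gamma>\<^sup>2 * A)" using A_pos gamma_pos by simp
    qed
    finally show "M / \<gamma> \<le> (A + h) / (\<gamma>\<^sup>2 * A)" .
  qed
  finally show ?thesis unfolding I_def .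
qed

end
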